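(* (Operator Hornich-Hlawka inequality.) Let $A,B,C,X$ be $N\times N$ real symmetric positive semidefinite matrices and $p\geq1$ an integer. Then, in the Löwner order on symmetric operators on $(\mathbb{R}^{N})^{\otimes p}$, \[ \otimes^{p}(A+X)+\otimes^{p}(B+X)+\otimes^{p}(C+X)+\otimes^{p}(A+B+C+X)\geq\otimes^{p}(A+B+X)+\otimes^{p}(B+C+X)+\otimes^{p}(C+A+X)+\otimes^{p}X, \] where $\otimes^{p}Y=Y\otimes\cdots\otimes Y$ ($p$ factors, Kronecker/tensor product).
   Context: The Löwner order: $S\leq T$ iff $T-S$ is positive semidefinite. *)

theory Defs
  imports "Jordan_Normal_Form.Matrix"
begin

definition kron :: "real mat \<Rightarrow> real mat \<Rightarrow> real mat" where
  "kron A B = mat (dim_row A * dim_row B) (dim_col A * dim_col B)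
     (\<lambda>(i, j). A $$ (i div dim_row B, j div dim_col B) * B $$ (i mod dim_row B, j mod dim_col B))"

fun tensor_pow :: "nat \<Rightarrow> real mat \<Rightarrow> real mat" where
  "tensor_pow 0 Y = 1\<^sub>m 1"
| "tensor_pow (Suc p) Y = kron (tensor_pow p Y) Y"

definition psd :: "nat \<Rightarrow> real mat \<Rightarrow> bool" where
  "psd n M \<longleftrightarrow> M \<in> carrier_mat n n \<and> M\<^sup>T = M \<and>
     (\<forall>v \<in> carrier_vec n. 0 \<le> v \<bullet> (M *\<^sub>v v))"

definition loewner_le :: "nat \<Rightarrow> real mat \<Rightarrow> real mat \<Rightarrow> bool" where
  "loewner_le n S T \<longleftrightarrow> S \<in> carrier_mat n n \<and> T \<in> carrier_mat n n \<and>
     S\<^sup>T = S \<and> T\<^sup>T = T \<and> psd n (T - S)"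

end

theory Submission
  imports Defs
begin

lemma dim_kron[simp]: "dim_row (kron A B) = dim_row A * dim_row B" "dim_col (kron A B) = dim_col A * dim_col B"
  by (auto simp: kron_def)

lemma index_kron[simp]: "i < dim_row A * dim_row B \<Longrightarrow> j < dim_col A * dim_col B \<Longrightarrow>
  kron A B $$ (i,j) = A $$ (i div dim_row B, j div dim_col B) * B $$ (i mod dim_row B, j mod dim_col B)"
  by (auto simp: kron_def)

lemma dim_tensor_pow[simp]: "dim_row (tensor_pow p Y) = dim_row Y ^ p" "dim_col (tensor_pow p Y) = dim_col Y ^ p"
  by (induction p) auto

definition qf :: "nat \<Rightarrow> real mat \<Rightarrow> (nat \<Rightarrow> real) \<Rightarrow> real" where
  "qf n Q f = (\<Sum>i<n. \<Sum>j<n. f i * Q $$ (i,j) * f j)"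

definition bf :: "nat \<Rightarrow> real mat \<Rightarrow> (nat \<Rightarrow> real) \<Rightarrow> (nat \<Rightarrow> real) \<Rightarrow> real" where
  "bf n Q f g = (\<Sum>i<n. \<Sum>j<n. f i * Q $$ (i,j) * g j)"

definition psd' :: "nat \<Rightarrow> real mat \<Rightarrow> bool" where
  "psd' n Q \<longleftrightarrow> Q \<in> carrier_mat n n \<and> (\<forall>i<n. \<forall>j<n. Q $$ (i,j) = Q $$ (j,i)) \<and> (\<forall>f. 0 \<le> qf n Q f)"

lemma psd'_qf: "psd' n Q \<Longrightarrow> 0 \<le> qf n Q f"
  unfolding psd'_def by blast
lemma psd'_sym: "psd' n Q \<Longrightarrow> i < n \<Longrightarrow> j < n \<Longrightarrow> Q $$ (i,j) = Q $$ (j,i)"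
  unfolding psd'_def by blast
lemma psd'_carrier: "psd' n Q \<Longrightarrow> Q \<in> carrier_mat n n"
  unfolding psd'_def by blast

lemma psd_iff: "psd n Q \<longleftrightarrow> psd' n Q"
proof -
  have sym: "Q\<^sup>T = Q \<longleftrightarrow> (\<forall>i<n. \<forall>j<n. Q $$ (i,j) = Q $$ (j,i))" if "Q \<in> carrier_mat n n"
    using that by (auto simp: mat_eq_iff)
  have qv: "v \<bullet> (Q *\<^sub>v v) = qf n Q (\<lambda>i. v $ i)" if "Q \<in> carrier_mat n n" "v \<in> carrier_vec n" for v
    using that by (auto simp: scalar_prod_def qf_def sum_distrib_left atLeast0LessThan mult.assoc intro!: sum.cong)
  show ?thesis
  proof
    assume a: "psd n Q"
    hence c: "Q \<in> carrier_mat n n" by (simp add: psd_def)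
    have "0 \<le> qf n Q f" for f
    proof -
      have "0 \<le> vec n f \<bullet> (Q *\<^sub>v vec n f)" using a by (auto simp: psd_def)
      also have "\<dots> = qf n Q (\<lambda>i. vec n f $ i)" using qv[OF c] by auto
      also have "\<dots> = qf n Q f" by (simp add: qf_def)
      finally show ?thesis .
    qed
    thus "psd' n Q" using a c sym by (auto simp: psd_def psd'_def)
  next
    assume a: "psd' n Q"
    hence c: "Q \<in> carrier_mat n n" by (simp add: psd'_def)
    show "psd n Q" using a c sym qv by (auto simp: psd_def psd'_def)
  qed
qed

lemma qf_add: assumes "psd' n Q"
  shows "qf n Q (\<lambda>i. f i + t * g i) = qf n Q f + 2 * t * bf n Q f g + t^2 * qf n Q g"
proof -
  have s: "bf n Q g f = bf n Q f g"
    unfolding bf_def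
    apply (subst sum.swap)
    using assms by (auto simp: psd'_def mult_ac intro!: sum.cong)
  have "qf n Q (\<lambda>i. f i + t * g i) = qf n Q f + t * bf n Q f g + t * bf n Q g f + t^2 * qf n Q g"
    by (simp add: qf_def bf_def algebra_simps sum.distrib sum_distrib_left power2_eq_square)
  thus ?thesis using s by simp
qed

lemma aux1: "(b::real) \<noteq> 0 \<Longrightarrow> q + 2 * (-(q+1)/(2*b)) * b = -1"
  by (simp add: field_simps)
lemma aux2: "(c::real) > 0 \<Longrightarrow> q + 2*(-b/c)*b + (-b/c)^2*c = q - b^2/c"
  by (simp add: field_simps power2_eq_square)
lemma ifm1: "(if P then 1 else 0) * (x::real) = (if P then x else 0)" by simp
lemma ifm2: "(x::real) * (if P then 1 else 0) = (if P then x else 0)" by simp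

lemma bf_zero: assumes "psd' n Q" "qf n Q g = 0" shows "bf n Q f g = 0"
proof (rule ccontr)
  assume b: "bf n Q f g \<noteq> 0"
  define t where "t = - (qf n Q f + 1) / (2 * bf n Q f g)"
  have "0 \<le> qf n Q (\<lambda>i. f i + t * g i)" using psd'_qf[OF assms(1)] by blast
  also have "\<dots> = qf n Q f + 2 * t * bf n Q f g" using qf_add[OF assms(1), of f t g] assms(2) by simp
  also have "\<dots> = -1" unfolding t_def by (rule aux1[OF b])
  finally show False by simp
qed

lemma bf_cs: assumes "psd' n Q" "qf n Q g > 0" shows "(bf n Q f g)^2 / qf n Q g \<le> qf n Q f"
proof -
  define t where "t = - bf n Q f g / qf n Q g"
  have "0 \<le> qf n Q (\<lambda>i. f i + t * g i)" using psd'_qf[OF assms(1)] by blast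
  also have "\<dots> = qf n Q f + 2 * t * bf n Q f g + t^2 * qf n Q g" by (rule qf_add[OF assms(1)])
  also have "\<dots> = qf n Q f - (bf n Q f g)^2 / qf n Q g" unfolding t_def by (rule aux2[OF assms(2)])
  finally show ?thesis by simp
qed

definition ev :: "nat \<Rightarrow> nat \<Rightarrow> real" where "ev k = (\<lambda>i. if i = k then 1 else 0)"

lemma sum_ev: "j < n \<Longrightarrow> (\<Sum>i<n. ev j i * h i) = (h j::real)"
proof -
  assume "j < n"
  have "(\<Sum>i<n. ev j i * h i) = (\<Sum>i<n. if i = j then h i else 0)"
    by (rule sum.cong) (auto simp: ev_def)
  also have "\<dots> = h j" using \<open>j < n\<close> by (simp add: sum.delta')
  finally show ?thesis .
qed

lemma sum_ev': "j < n \<Longrightarrow> (\<Sum>i<n. h i * ev j i) = (h j::real)"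
  using sum_ev[of j n h] by (simp add: mult.commute)

lemma qf_ev: "k < n \<Longrightarrow> qf n Q (ev k) = Q $$ (k,k)"
  unfolding qf_def by (simp add: sum_ev sum_ev')

lemma bf_ev: "k < n \<Longrightarrow> bf n Q f (ev k) = (\<Sum>i<n. f i * Q $$ (i,k))"
  unfolding bf_def by (simp add: sum_ev')

lemma psd_diag: "psd' n Q \<Longrightarrow> k < n \<Longrightarrow> 0 \<le> Q $$ (k,k)"
  using qf_ev[of k n Q] psd'_qf[of n Q "ev k"] by simp

lemma psd_diag_zero: assumes "psd' n Q" "k < n" "j < n" "Q $$ (k,k) = 0" shows "Q $$ (j,k) = 0"
proof -
  have "qf n Q (ev k) = 0" using qf_ev[OF assms(2)] assms(4) by simp
  from bf_zero[OF assms(1) this] have "bf n Q (ev j) (ev k) = 0" .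
  hence "(\<Sum>i<n. ev j i * Q $$ (i,k)) = 0" using bf_ev[OF assms(2)] by simp
  moreover have "(\<Sum>i<n. ev j i * Q $$ (i,k)) = Q $$ (j,k)"
    using sum_ev[OF assms(3)] .
  ultimately show ?thesis by simp
qed

lemma lt_mult_aux: "a < m \<Longrightarrow> b < n \<Longrightarrow> a*n+b < (m::nat)*n"
proof -
  assume "a < m" "b < n"
  hence "a*n+b < a*n+n" by simp
  also have "\<dots> = Suc a * n" by simp
  also have "\<dots> \<le> m*n" using \<open>a<m\<close> by (intro mult_le_mono1) simp
  finally show ?thesis .
qed

lemma sum_lessThan_plus: "(\<Sum>i<a+(b::nat). f i) = (\<Sum>i<a. f i) + (\<Sum>i<b. f (a+i)::real)"
  by (induction b) (simp_all add: add.assoc)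

lemma sum_mult_reindex: "(\<Sum>i<(m::nat)*n. f i) = (\<Sum>a<m. \<Sum>b<n. f (a*n+b)::real)"
proof (induction m)
  case 0
  then show ?case by simp
next
  case (Suc m)
  have "Suc m * n = m*n + n" by simp
  hence "(\<Sum>i<Suc m * n. f i) = (\<Sum>i<m*n. f i) + (\<Sum>b<n. f (m*n+b))"
    by (simp only: sum_lessThan_plus)
  also have "\<dots> = (\<Sum>a<Suc m. \<Sum>b<n. f (a*n+b))" using Suc.IH by simp
  finally show ?case .
qed

lemma psd_decomp: "psd' n Q \<Longrightarrow> \<exists>(R::nat) u. \<forall>i<n. \<forall>j<n. Q $$ (i,j) = (\<Sum>r<R. u r i * u r j)"
proof (induction "card {k. k < n \<and> Q $$ (k,k) \<noteq> 0}" arbitrary: Q rule: less_induct)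
  case less
  have sym: "\<And>i j. i < n \<Longrightarrow> j < n \<Longrightarrow> Q $$ (i,j) = Q $$ (j,i)" using psd'_sym[OF less.prems] by blast
  show ?case
  proof (cases "\<exists>k<n. Q $$ (k,k) \<noteq> 0")
    case False
    hence Z: "\<forall>i<n. \<forall>j<n. Q $$ (i,j) = 0" using psd_diag_zero[OF less.prems] by blast
    show ?thesis
      apply (rule exI[where x="0::nat"])
      apply (rule exI[where x="\<lambda>r i. 0::real"])
      using Z by simp
  next
    case True
    then obtain k where k: "k < n" "Q $$ (k,k) \<noteq> 0" by blast
    have pos: "Q $$ (k,k) > 0" using psd_diag[OF less.prems k(1)] k(2) by simp
    define u where "u i = Q $$ (i,k) / sqrt (Q $$ (k,k))" for i
    define Q' where "Q' = mat n n (\<lambda>(i,j). Q $$ (i,j) - u i * u j)"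
    have Q'e: "Q' $$ (i,j) = Q $$ (i,j) - u i * u j" if "i < n" "j < n" for i j
      using that by (simp add: Q'_def)
    have uu: "u i * u j = Q $$ (i,k) * Q $$ (j,k) / Q $$ (k,k)" for i j
      using pos by (simp add: u_def)
    have qf': "qf n Q' f = qf n Q f - (\<Sum>i<n. f i * u i)^2" for f
    proof -
      have "qf n Q' f = (\<Sum>i<n. \<Sum>j<n. f i * Q $$ (i,j) * f j - (f i * u i) * (f j * u j))"
        unfolding qf_def by (auto simp: Q'e algebra_simps intro!: sum.cong)
      also have "\<dots> = qf n Q f - (\<Sum>i<n. f i * u i) * (\<Sum>j<n. f j * u j)"
        by (simp add: qf_def sum_subtractf sum_product)
      finally show ?thesis by (simp add: power2_eq_square)
    qed
    have su: "(\<Sum>i<n. f i * u i)^2 = (bf n Q f (ev k))^2 / qf n Q (ev k)" for f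
    proof -
      have "(\<Sum>i<n. f i * u i) = (\<Sum>i<n. f i * Q $$ (i,k)) / sqrt (Q $$ (k,k))"
        by (simp add: u_def sum_divide_distrib)
      thus ?thesis using pos by (simp add: bf_ev[OF k(1)] qf_ev[OF k(1)] power_divide)
    qed
    have psdQ': "psd' n Q'"
      unfolding psd'_def
    proof (intro conjI allI impI)
      show "Q' \<in> carrier_mat n n" by (simp add: Q'_def)
      fix i j assume "i < n" "j < n"
      thus "Q' $$ (i,j) = Q' $$ (j,i)" using sym[of i j] by (simp add: Q'e mult.commute)
    next
      fix f
      have "(bf n Q f (ev k))^2 / qf n Q (ev k) \<le> qf n Q f"
        using bf_cs[OF less.prems, of "ev k" f] qf_ev[OF k(1), of Q] pos by simp
      thus "0 \<le> qf n Q' f" using qf' su by simp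
    qed
    have sub: "{j. j < n \<and> Q' $$ (j,j) \<noteq> 0} \<subset> {j. j < n \<and> Q $$ (j,j) \<noteq> 0}"
    proof
      show "{j. j < n \<and> Q' $$ (j,j) \<noteq> 0} \<subseteq> {j. j < n \<and> Q $$ (j,j) \<noteq> 0}"
      proof clarify
        fix j assume j: "j < n" "Q' $$ (j,j) \<noteq> 0" "Q $$ (j,j) = 0"
        have "Q $$ (k,j) = 0" using psd_diag_zero[OF less.prems j(1) k(1) j(3)] .
        hence "Q $$ (j,k) = 0" using sym[OF j(1) k(1)] by simp
        thus False using j by (simp add: Q'e u_def)
      qed
      have "Q' $$ (k,k) = 0" using k pos by (simp add: Q'e uu power2_eq_square)
      thus "{j. j < n \<and> Q' $$ (j,j) \<noteq> 0} \<noteq> {j. j < n \<and> Q $$ (j,j) \<noteq> 0}" using k by blast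
    qed
    have "card {j. j < n \<and> Q' $$ (j,j) \<noteq> 0} < card {j. j < n \<and> Q $$ (j,j) \<noteq> 0}"
      by (rule psubset_card_mono[OF _ sub]) simp
    from less.hyps[OF this psdQ'] obtain R :: nat and w :: "nat \<Rightarrow> nat \<Rightarrow> real" where w: "\<forall>i<n. \<forall>j<n. Q' $$ (i,j) = (\<Sum>r<R. w r i * w r j)" by blast
    define w' where "w' r = (case r of 0 \<Rightarrow> u | Suc r' \<Rightarrow> w r')" for r
    show ?thesis
    proof (intro exI[of _ "Suc R"] exI[of _ w'] allI impI)
      fix i j assume "i < n" "j < n"
      thus "Q $$ (i,j) = (\<Sum>r<Suc R. w' r i * w' r j)"
      proof -
        have "(\<Sum>r<Suc R. w' r i * w' r j) = w' 0 i * w' 0 j + (\<Sum>r<R. w' (Suc r) i * w' (Suc r) j)"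
          by (rule sum.lessThan_Suc_shift)
        also have "\<dots> = u i * u j + Q' $$ (i,j)" using w \<open>i < n\<close> \<open>j < n\<close> by (simp add: w'_def)
        also have "\<dots> = Q $$ (i,j)" using Q'e \<open>i < n\<close> \<open>j < n\<close> by simp
        finally show ?thesis by simp
      qed
    qed
  qed
qed

lemma swap5:
  fixes f :: "'a \<Rightarrow> 'b \<Rightarrow> 'c \<Rightarrow> 'd \<Rightarrow> 'e \<Rightarrow> real"
  shows "(\<Sum>a\<in>A. \<Sum>b\<in>B. \<Sum>c\<in>C. \<Sum>d\<in>D. \<Sum>r\<in>R. f a b c d r) = (\<Sum>r\<in>R. \<Sum>a\<in>A. \<Sum>b\<in>B. \<Sum>c\<in>C. \<Sum>d\<in>D. f a b c d r)"
proof -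
  have "(\<Sum>a\<in>A. \<Sum>b\<in>B. \<Sum>c\<in>C. \<Sum>d\<in>D. \<Sum>r\<in>R. f a b c d r) = (\<Sum>a\<in>A. \<Sum>b\<in>B. \<Sum>c\<in>C. \<Sum>r\<in>R. \<Sum>d\<in>D. f a b c d r)"
    by (rule sum.cong[OF refl])+ (rule sum.swap)
  also have "\<dots> = (\<Sum>a\<in>A. \<Sum>b\<in>B. \<Sum>r\<in>R. \<Sum>c\<in>C. \<Sum>d\<in>D. f a b c d r)"
    by (rule sum.cong[OF refl])+ (rule sum.swap)
  also have "\<dots> = (\<Sum>a\<in>A. \<Sum>r\<in>R. \<Sum>b\<in>B. \<Sum>c\<in>C. \<Sum>d\<in>D. f a b c d r)"
    by (rule sum.cong[OF refl])+ (rule sum.swap)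
  also have "\<dots> = (\<Sum>r\<in>R. \<Sum>a\<in>A. \<Sum>b\<in>B. \<Sum>c\<in>C. \<Sum>d\<in>D. f a b c d r)"
    by (rule sum.swap)
  finally show ?thesis .
qed

lemma swap_mid:
  fixes f :: "'r \<Rightarrow> 'a \<Rightarrow> 'b \<Rightarrow> 'c \<Rightarrow> 'd \<Rightarrow> real"
  shows "(\<Sum>r\<in>R. \<Sum>a\<in>A. \<Sum>c\<in>C. \<Sum>b\<in>B. \<Sum>d\<in>D. f r a b c d) = (\<Sum>r\<in>R. \<Sum>a\<in>A. \<Sum>b\<in>B. \<Sum>c\<in>C. \<Sum>d\<in>D. f r a b c d)"
  by (rule sum.cong[OF refl])+ (rule sum.swap)

lemma divmod_aux: "b < n \<Longrightarrow> (a*n+b) div n = (a::nat)" "b < n \<Longrightarrow> (a*n+b) mod n = b"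
  by auto

lemma psd_kron: assumes P: "psd' m P" and Q: "psd' n Q" shows "psd' (m*n) (kron P Q)"
proof -
  have cP: "P \<in> carrier_mat m m" and cQ: "Q \<in> carrier_mat n n" using psd'_carrier P Q by auto
  have dims: "dim_row P = m" "dim_col P = m" "dim_row Q = n" "dim_col Q = n" using cP cQ by auto
  have Kidx: "kron P Q $$ (a*n+b, c*n+d) = P $$ (a,c) * Q $$ (b,d)" if "a < m" "b < n" "c < m" "d < n" for a b c d
    using that by (simp add: dims lt_mult_aux divmod_aux)
  obtain R :: nat and u :: "nat \<Rightarrow> nat \<Rightarrow> real" where u: "\<forall>i<n. \<forall>j<n. Q $$ (i,j) = (\<Sum>r<R. u r i * u r j)"
    using psd_decomp[OF Q] by blast
  show ?thesis unfolding psd'_def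
  proof (intro conjI allI impI)
    show "kron P Q \<in> carrier_mat (m*n) (m*n)" by (rule carrier_matI) (simp_all add: dims)
  next
    fix i j assume i: "i < m*n" and j: "j < m*n"
    hence n0: "n > 0" by (cases n) auto
    have "i div n < m" "j div n < m" using i j by (auto simp: less_mult_imp_div_less)
    moreover have "i mod n < n" "j mod n < n" using n0 by simp_all
    ultimately show "kron P Q $$ (i,j) = kron P Q $$ (j,i)"
      using i j psd'_sym[OF P, of "i div n" "j div n"] psd'_sym[OF Q, of "i mod n" "j mod n"]
      by (simp add: dims mult.commute)
  next
    fix v
    define y where "y r a = (\<Sum>b<n. v (a*n+b) * u r b)" for r a
    define T where "T r a b c d = v (a*n+b) * u r b * P $$ (a,c) * (v (c*n+d) * u r d)" for r a b c d
    have "qf (m*n) (kron P Q) v = (\<Sum>a<m. \<Sum>b<n. \<Sum>c<m. \<Sum>d<n. v (a*n+b) * kron P Q $$ (a*n+b, c*n+d) * v (c*n+d))"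
      unfolding qf_def by (simp only: sum_mult_reindex)
    also have "\<dots> = (\<Sum>a<m. \<Sum>b<n. \<Sum>c<m. \<Sum>d<n. \<Sum>r<R. T r a b c d)"
      apply (rule sum.cong[OF refl])+
      apply (simp add: Kidx u T_def sum_distrib_left sum_distrib_right mult_ac)
      done
    also have "\<dots> = (\<Sum>r<R. \<Sum>a<m. \<Sum>b<n. \<Sum>c<m. \<Sum>d<n. T r a b c d)"
      by (rule swap5)
    also have "\<dots> = (\<Sum>r<R. \<Sum>a<m. \<Sum>c<m. \<Sum>b<n. \<Sum>d<n. T r a b c d)"
      by (rule swap_mid[symmetric])
    also have "\<dots> = (\<Sum>r<R. qf m P (y r))"
      unfolding qf_def y_def T_def
      by (simp add: sum_distrib_left sum_distrib_right mult_ac)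
    finally have e: "qf (m*n) (kron P Q) v = (\<Sum>r<R. qf m P (y r))" .
    show "0 \<le> qf (m*n) (kron P Q) v" unfolding e by (rule sum_nonneg) (rule psd'_qf[OF P])
  qed
qed

lemma psd_add: assumes P: "psd' n P" and Q: "psd' n Q" shows "psd' n (P + Q)"
proof -
  have cP: "P \<in> carrier_mat n n" and cQ: "Q \<in> carrier_mat n n" using psd'_carrier P Q by auto
  have dims: "dim_row P = n" "dim_col P = n" "dim_row Q = n" "dim_col Q = n" using cP cQ by auto
  show ?thesis unfolding psd'_def
  proof (intro conjI allI impI)
    show "P + Q \<in> carrier_mat n n" by (rule carrier_matI) (simp_all add: dims)
  next
    fix i j assume "i < n" "j < n"
    thus "(P + Q) $$ (i,j) = (P + Q) $$ (j,i)"
      using psd'_sym[OF P, of i j] psd'_sym[OF Q, of i j] by (simp add: dims)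
  next
    fix f
    have "qf n (P + Q) f = (\<Sum>i<n. \<Sum>j<n. f i * P $$ (i,j) * f j + f i * Q $$ (i,j) * f j)"
      unfolding qf_def by (rule sum.cong[OF refl])+ (simp add: dims algebra_simps)
    also have "\<dots> = qf n P f + qf n Q f" unfolding qf_def by (simp add: sum.distrib)
    finally show "0 \<le> qf n (P + Q) f" using psd'_qf[OF P, of f] psd'_qf[OF Q, of f] by simp
  qed
qed

lemma psd_zero: "psd' n (0\<^sub>m n n)"
  unfolding psd'_def qf_def by simp

lemma psd_one: "psd' 1 (1\<^sub>m 1)"
  unfolding psd'_def qf_def by simp

lemma psd_tensor_pow: assumes "psd' N Y" shows "psd' (N^p) (tensor_pow p Y)"
proof (induction p)
  case 0
  then show ?case using psd_one by simp
next
  case (Suc p)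
  have "psd' (N^p * N) (kron (tensor_pow p Y) Y)" by (rule psd_kron[OF Suc.IH assms])
  thus ?case by (simp only: power_Suc2 tensor_pow.simps)
qed

fun F1 :: "nat \<Rightarrow> real mat \<Rightarrow> real mat \<Rightarrow> real mat" where
  "F1 0 X A = 0\<^sub>m 1 1"
| "F1 (Suc p) X A = kron (F1 p X A) (A + X) + kron (tensor_pow p X) A"

fun F2 :: "nat \<Rightarrow> real mat \<Rightarrow> real mat \<Rightarrow> real mat \<Rightarrow> real mat" where
  "F2 0 X A B = 0\<^sub>m 1 1"
| "F2 (Suc p) X A B = kron (F2 p X A B) (A + B + X) + kron (F1 p X A) B + kron (F1 p X B) A"

fun F3 :: "nat \<Rightarrow> real mat \<Rightarrow> real mat \<Rightarrow> real mat \<Rightarrow> real mat \<Rightarrow> real mat" where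
  "F3 0 X A B C = 0\<^sub>m 1 1"
| "F3 (Suc p) X A B C = kron (F3 p X A B C) (A + B + C + X) + kron (F2 p X A B) C + kron (F2 p X B C) A + kron (F2 p X C A) B"

lemma psd_F1: assumes "psd' N X" "psd' N A" shows "psd' (N^p) (F1 p X A)"
proof (induction p)
  case 0
  then show ?case using psd_zero[of 1] by simp
next
  case (Suc p)
  have "psd' (N^p * N) (kron (F1 p X A) (A + X) + kron (tensor_pow p X) A)"
    by (intro psd_add psd_kron Suc.IH psd_tensor_pow assms)
  thus ?case by (simp only: power_Suc2 F1.simps)
qed

lemma psd_F2: assumes "psd' N X" "psd' N A" "psd' N B" shows "psd' (N^p) (F2 p X A B)"
proof (induction p)
  case 0
  then show ?case using psd_zero[of 1] by simp
next
  case (Suc p)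
  have "psd' (N^p * N) (kron (F2 p X A B) (A + B + X) + kron (F1 p X A) B + kron (F1 p X B) A)"
    by (intro psd_add psd_kron Suc.IH psd_F1 assms)
  thus ?case by (simp only: power_Suc2 F2.simps)
qed

lemma psd_F3: assumes "psd' N X" "psd' N A" "psd' N B" "psd' N C" shows "psd' (N^p) (F3 p X A B C)"
proof (induction p)
  case 0
  then show ?case using psd_zero[of 1] by simp
next
  case (Suc p)
  have "psd' (N^p * N) (kron (F3 p X A B C) (A + B + C + X) + kron (F2 p X A B) C + kron (F2 p X B C) A + kron (F2 p X C A) B)"
    by (intro psd_add psd_kron Suc.IH psd_F2 assms)
  thus ?case by (simp only: power_Suc2 F3.simps)
qed

lemma idx_facts: assumes "i < m * (N::nat)" shows "N > 0" "i div N < m" "i mod N < N"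
proof -
  show n0: "N > 0" using assms by (cases N) auto
  show "i div N < m" using assms by (simp add: less_mult_imp_div_less)
  show "i mod N < N" using n0 by simp
qed

lemma F1_eq: assumes X: "psd' N X" and A: "psd' N A"
  shows "i < N^p \<Longrightarrow> j < N^p \<Longrightarrow> F1 p X A $$ (i,j) = tensor_pow p (A + X) $$ (i,j) - tensor_pow p X $$ (i,j)"
proof (induction p arbitrary: i j)
  case 0
  then show ?case by simp
next
  case (Suc p)
  have dX: "dim_row X = N" "dim_col X = N" and dA: "dim_row A = N" "dim_col A = N"
    using psd'_carrier[OF X] psd'_carrier[OF A] by auto
  have dF: "dim_row (F1 p X A) = N^p" "dim_col (F1 p X A) = N^p"
    using psd'_carrier[OF psd_F1[OF X A, of p]] by auto
  have i: "i < N^p * N" and j: "j < N^p * N" using Suc.prems by (simp_all add: mult.commute)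
  note fi = idx_facts[OF i] and fj = idx_facts[OF j]
  have IH: "F1 p X A $$ (i div N, j div N) = tensor_pow p (A + X) $$ (i div N, j div N) - tensor_pow p X $$ (i div N, j div N)"
    using Suc.IH fi fj by blast
  show ?case
    using i j fi fj by (simp add: dX dA dF IH algebra_simps)
qed

lemma F2_eq: assumes X: "psd' N X" and A: "psd' N A" and B: "psd' N B"
  shows "i < N^p \<Longrightarrow> j < N^p \<Longrightarrow> F2 p X A B $$ (i,j) = tensor_pow p (A + B + X) $$ (i,j)
     - tensor_pow p (A + X) $$ (i,j) - tensor_pow p (B + X) $$ (i,j) + tensor_pow p X $$ (i,j)"
proof (induction p arbitrary: i j)
  case 0
  then show ?case by simp
next
  case (Suc p)
  have dX: "dim_row X = N" "dim_col X = N" and dA: "dim_row A = N" "dim_col A = N"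
    and dB: "dim_row B = N" "dim_col B = N"
    using psd'_carrier[OF X] psd'_carrier[OF A] psd'_carrier[OF B] by auto
  have dF: "dim_row (F2 p X A B) = N^p" "dim_col (F2 p X A B) = N^p"
    "dim_row (F1 p X A) = N^p" "dim_col (F1 p X A) = N^p"
    "dim_row (F1 p X B) = N^p" "dim_col (F1 p X B) = N^p"
    using psd'_carrier[OF psd_F2[OF X A B, of p]] psd'_carrier[OF psd_F1[OF X A, of p]]
      psd'_carrier[OF psd_F1[OF X B, of p]] by auto
  have i: "i < N^p * N" and j: "j < N^p * N" using Suc.prems by (simp_all add: mult.commute)
  note fi = idx_facts[OF i] and fj = idx_facts[OF j]
  have IH: "F2 p X A B $$ (i div N, j div N) = tensor_pow p (A + B + X) $$ (i div N, j div N)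
     - tensor_pow p (A + X) $$ (i div N, j div N) - tensor_pow p (B + X) $$ (i div N, j div N) + tensor_pow p X $$ (i div N, j div N)"
    using Suc.IH fi fj by blast
  have E1: "F1 p X A $$ (i div N, j div N) = tensor_pow p (A + X) $$ (i div N, j div N) - tensor_pow p X $$ (i div N, j div N)"
    using F1_eq[OF X A] fi fj by blast
  have E2: "F1 p X B $$ (i div N, j div N) = tensor_pow p (B + X) $$ (i div N, j div N) - tensor_pow p X $$ (i div N, j div N)"
    using F1_eq[OF X B] fi fj by blast
  show ?case
    using i j fi fj by (simp add: dX dA dB dF IH E1 E2 algebra_simps)
qed

lemma F3_eq: assumes X: "psd' N X" and A: "psd' N A" and B: "psd' N B" and C: "psd' N C"
  shows "i < N^p \<Longrightarrow> j < N^p \<Longrightarrow> F3 p X A B C $$ (i,j) =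
     tensor_pow p (A + X) $$ (i,j) + tensor_pow p (B + X) $$ (i,j) + tensor_pow p (C + X) $$ (i,j)
     + tensor_pow p (A + B + C + X) $$ (i,j)
     - tensor_pow p (A + B + X) $$ (i,j) - tensor_pow p (B + C + X) $$ (i,j) - tensor_pow p (C + A + X) $$ (i,j)
     - tensor_pow p X $$ (i,j)"
proof (induction p arbitrary: i j)
  case 0
  then show ?case by simp
next
  case (Suc p)
  have dX: "dim_row X = N" "dim_col X = N" and dA: "dim_row A = N" "dim_col A = N"
    and dB: "dim_row B = N" "dim_col B = N" and dC: "dim_row C = N" "dim_col C = N"
    using psd'_carrier[OF X] psd'_carrier[OF A] psd'_carrier[OF B] psd'_carrier[OF C] by auto
  have dF: "dim_row (F3 p X A B C) = N^p" "dim_col (F3 p X A B C) = N^p"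
    "dim_row (F2 p X A B) = N^p" "dim_col (F2 p X A B) = N^p"
    "dim_row (F2 p X B C) = N^p" "dim_col (F2 p X B C) = N^p"
    "dim_row (F2 p X C A) = N^p" "dim_col (F2 p X C A) = N^p"
    using psd'_carrier[OF psd_F3[OF X A B C, of p]] psd'_carrier[OF psd_F2[OF X A B, of p]]
      psd'_carrier[OF psd_F2[OF X B C, of p]] psd'_carrier[OF psd_F2[OF X C A, of p]] by auto
  have i: "i < N^p * N" and j: "j < N^p * N" using Suc.prems by (simp_all add: mult.commute)
  note fi = idx_facts[OF i] and fj = idx_facts[OF j]
  define i' where "i' = i div N"
  define j' where "j' = j div N"
  have i': "i' < N^p" and j': "j' < N^p" using fi fj by (simp_all add: i'_def j'_def)
  have IH: "F3 p X A B C $$ (i', j') =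
     tensor_pow p (A + X) $$ (i',j') + tensor_pow p (B + X) $$ (i',j') + tensor_pow p (C + X) $$ (i',j')
     + tensor_pow p (A + B + C + X) $$ (i',j')
     - tensor_pow p (A + B + X) $$ (i',j') - tensor_pow p (B + C + X) $$ (i',j') - tensor_pow p (C + A + X) $$ (i',j')
     - tensor_pow p X $$ (i',j')"
    using Suc.IH i' j' by blast
  have E1: "F2 p X A B $$ (i',j') = tensor_pow p (A + B + X) $$ (i',j')
     - tensor_pow p (A + X) $$ (i',j') - tensor_pow p (B + X) $$ (i',j') + tensor_pow p X $$ (i',j')"
    using F2_eq[OF X A B] i' j' by blast
  have E2: "F2 p X B C $$ (i',j') = tensor_pow p (B + C + X) $$ (i',j')
     - tensor_pow p (B + X) $$ (i',j') - tensor_pow p (C + X) $$ (i',j') + tensor_pow p X $$ (i',j')"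
    using F2_eq[OF X B C] i' j' by blast
  have E3: "F2 p X C A $$ (i',j') = tensor_pow p (C + A + X) $$ (i',j')
     - tensor_pow p (C + X) $$ (i',j') - tensor_pow p (A + X) $$ (i',j') + tensor_pow p X $$ (i',j')"
    using F2_eq[OF X C A] i' j' by blast
  show ?case
    using i j fi fj by (simp add: dX dA dB dC dF IH E1 E2 E3 algebra_simps flip: i'_def j'_def)
qed

theorem theorem5p8:
  fixes A B C X :: "real mat" and N p :: nat
  assumes "psd N A" and "psd N B" and "psd N C" and "psd N X"
    and "p \<ge> 1"
  shows "loewner_le (N ^ p)
     (tensor_pow p (A + B + X) + tensor_pow p (B + C + X) + tensor_pow p (C + A + X) + tensor_pow p X)
     (tensor_pow p (A + X) + tensor_pow p (B + X) + tensor_pow p (C + X) + tensor_pow p (A + B + C + X))"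
proof -
  have A: "psd' N A" and B: "psd' N B" and C: "psd' N C" and X: "psd' N X"
    using assms psd_iff by auto
  define S where "S = tensor_pow p (A + B + X) + tensor_pow p (B + C + X) + tensor_pow p (C + A + X) + tensor_pow p X"
  define T where "T = tensor_pow p (A + X) + tensor_pow p (B + X) + tensor_pow p (C + X) + tensor_pow p (A + B + C + X)"
  have pS: "psd' (N^p) S" unfolding S_def
    by (intro psd_add psd_tensor_pow A B C X)
  have pT: "psd' (N^p) T" unfolding T_def
    by (intro psd_add psd_tensor_pow A B C X)
  have dX: "dim_row X = N" "dim_col X = N" and dA: "dim_row A = N" "dim_col A = N"
    and dB: "dim_row B = N" "dim_col B = N" and dC: "dim_row C = N" "dim_col C = N"
    using psd'_carrier[OF X] psd'_carrier[OF A] psd'_carrier[OF B] psd'_carrier[OF C] by auto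
  have dF: "dim_row (F3 p X A B C) = N^p" "dim_col (F3 p X A B C) = N^p"
    using psd'_carrier[OF psd_F3[OF X A B C, of p]] by auto
  have eq: "T - S = F3 p X A B C"
  proof (rule eq_matI)
    fix i j assume "i < dim_row (F3 p X A B C)" "j < dim_col (F3 p X A B C)"
    hence i: "i < N^p" and j: "j < N^p" using dF by auto
    show "(T - S) $$ (i,j) = F3 p X A B C $$ (i,j)"
      using i j unfolding S_def T_def by (simp add: dX dA dB dC F3_eq[OF X A B C i j])
  next
    show "dim_row (T - S) = dim_row (F3 p X A B C)" unfolding S_def by (simp add: dF dX)
    show "dim_col (T - S) = dim_col (F3 p X A B C)" unfolding S_def by (simp add: dF dX)
  qed
  have "psd (N^p) (T - S)" unfolding eq psd_iff by (rule psd_F3[OF X A B C])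
  moreover have "psd (N^p) S" "psd (N^p) T" using pS pT psd_iff by auto
  ultimately have "loewner_le (N^p) S T" unfolding loewner_le_def psd_def by auto
  thus ?thesis unfolding S_def T_def .
qed

end
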